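(* Let $\mathcal{C}$ be a path category and let $\mathcal{D}$ be a class of display maps with weak (respectively strong) homotopy $\Pi$-types in $\mathcal{C}$. Let $\mathcal{I}$ be the class of isomorphisms in $\mathcal{C}$. Then $\mathcal{D} \cup \mathcal{I}$ is also a class of display maps with weak (respectively strong) homotopy $\Pi$-types.
   Context: A path category is a category with two classes of maps, fibrations and weak equivalences, such that: fibrations are closed under composition and contain the isomorphisms; pullbacks of fibrations along arbitrary maps exist and are fibrations; there is a terminal object and every map to it is a fibration; isomorphisms are weak equivalences; weak equivalences satisfy 2-out-of-6; every object $X$ has a path object, a factorisation of the diagonal as a weak equivalence $X \to PX$ followed by a fibration $(s,t): PX \to X\times X$; pullbacks of trivial fibrations are trivial fibrations; every trivial fibration has a section. For a fibration $p: Y \to A$ one similarly factors $Y \to Y\times_A Y$ to get a fibrewise path object $P_A Y$, and two maps $m, m': D \to Y$ over $A$ are fibrewise homotopic ($m \simeq_A m'$) if there is $H: D \to P_A Y$ with $(s,t)H = (m,m')$. Homotopy $\Pi$-types: given fibrations $g: C \to B$ and $f: B \to A$, a weak homotopy $\Pi$-type $\Pi_f(g)$ is a fibration $\pi: \Pi \to A$ with a map $\varepsilon: \Pi\times_A B \to C$ satisfying $g\varepsilon = $ the projection to $B$, such that for every map $h: D \to A$ and every $m: D\times_A B \to C$ with $gm$ equal to the projection to $B$, there is $k: D \to \Pi$ with $\pi k = h$ and $\varepsilon\circ(k\times_A B) \simeq_B m$; it is strong if moreover for any $k, k': D \to \Pi$ over $A$ with $\varepsilon(k\times_A B) \simeq_B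 \varepsilon(k'\times_A B)$ we have $k \simeq_A k'$. A class $\mathcal{D}$ of fibrations is a class of display maps with weak (strong) homotopy $\Pi$-types if: every identity map lies in $\mathcal{D}$; the pullback of a map in $\mathcal{D}$ along any map can be found in $\mathcal{D}$ (some pullback lies in $\mathcal{D}$); and for all composable $d: X \to I$, $e: I \to J$ in $\mathcal{D}$ a weak (strong) homotopy $\Pi$-type $\Pi_e(d)$ exists and can be found in $\mathcal{D}$. *)

theory Defs
  imports Main
begin

record ('o, 'm) cat =
  obj :: "'o set"
  arr :: "'m set"
  dm  :: "'m \<Rightarrow> 'o"
  cd  :: "'m \<Rightarrow> 'o"
  cmp :: "'m \<Rightarrow> 'm \<Rightarrow> 'm"   (* cmp C g f = g \<circ> f *)
  idt :: "'o \<Rightarrow> 'm"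

definition hom :: "('o, 'm) cat \<Rightarrow> 'o \<Rightarrow> 'o \<Rightarrow> 'm set" where
  "hom C X Y = {f \<in> arr C. dm C f = X \<and> cd C f = Y}"

definition is_category :: "('o, 'm) cat \<Rightarrow> bool" where
  "is_category C \<longleftrightarrow>
     (\<forall>f \<in> arr C. dm C f \<in> obj C \<and> cd C f \<in> obj C) \<and>
     (\<forall>X \<in> obj C. idt C X \<in> hom C X X) \<and>
     (\<forall>f \<in> arr C. \<forall>g \<in> arr C. cd C f = dm C g \<longrightarrow>
         cmp C g f \<in> hom C (dm C f) (cd C g)) \<and>
     (\<forall>f \<in> arr C. cmp C f (idt C (dm C f)) = f \<and> cmp C (idt C (cd C f)) f = f) \<and>
     (\<forall>f \<in> arr C. \<forall>g \<in> arr C. \<forall>h \<in> arr C. cd C f = dm C g \<longrightarrow> cd C g = dm C h \<longrightarrow>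
         cmp C h (cmp C g f) = cmp C (cmp C h g) f)"

definition isos :: "('o, 'm) cat \<Rightarrow> 'm set" where
  "isos C = {f \<in> arr C. \<exists>g \<in> hom C (cd C f) (dm C f).
               cmp C g f = idt C (dm C f) \<and> cmp C f g = idt C (cd C f)}"

text \<open>A pullback square: p1 : P \<rightarrow> X, p2 : P \<rightarrow> Y of f : X \<rightarrow> Z and g : Y \<rightarrow> Z
  (so p2 is the pullback of f along g).\<close>
definition is_pullback :: "('o, 'm) cat \<Rightarrow> 'm \<Rightarrow> 'm \<Rightarrow> 'o \<Rightarrow> 'm \<Rightarrow> 'm \<Rightarrow> bool" where
  "is_pullback C f g P p1 p2 \<longleftrightarrow>
     f \<in> arr C \<and> g \<in> arr C \<and> cd C f = cd C g \<and>
     p1 \<in> hom C P (dm C f) \<and> p2 \<in> hom C P (dm C g) \<and>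
     cmp C f p1 = cmp C g p2 \<and>
     (\<forall>W a b. a \<in> hom C W (dm C f) \<longrightarrow> b \<in> hom C W (dm C g) \<longrightarrow> cmp C f a = cmp C g b \<longrightarrow>
        (\<exists>!u. u \<in> hom C W P \<and> cmp C p1 u = a \<and> cmp C p2 u = b))"

definition is_product :: "('o, 'm) cat \<Rightarrow> 'o \<Rightarrow> 'o \<Rightarrow> 'o \<Rightarrow> 'm \<Rightarrow> 'm \<Rightarrow> bool" where
  "is_product C X Y P p1 p2 \<longleftrightarrow>
     p1 \<in> hom C P X \<and> p2 \<in> hom C P Y \<and>
     (\<forall>W a b. a \<in> hom C W X \<longrightarrow> b \<in> hom C W Y \<longrightarrow>
        (\<exists>!u. u \<in> hom C W P \<and> cmp C p1 u = a \<and> cmp C p2 u = b))"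

definition is_terminal :: "('o, 'm) cat \<Rightarrow> 'o \<Rightarrow> bool" where
  "is_terminal C T \<longleftrightarrow> T \<in> obj C \<and> (\<forall>X \<in> obj C. \<exists>!u. u \<in> hom C X T)"

definition two_out_of_six :: "('o, 'm) cat \<Rightarrow> 'm set \<Rightarrow> bool" where
  "two_out_of_six C We \<longleftrightarrow>
     (\<forall>f \<in> arr C. \<forall>g \<in> arr C. \<forall>h \<in> arr C. cd C f = dm C g \<longrightarrow> cd C g = dm C h \<longrightarrow>
        cmp C g f \<in> We \<longrightarrow> cmp C h g \<in> We \<longrightarrow>
        f \<in> We \<and> g \<in> We \<and> h \<in> We \<and> cmp C h (cmp C g f) \<in> We)"

definition path_category :: "('o, 'm) cat \<Rightarrow> 'm set \<Rightarrow> 'm set \<Rightarrow> bool" where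
  "path_category C Fib We \<longleftrightarrow>
     is_category C \<and> Fib \<subseteq> arr C \<and> We \<subseteq> arr C \<and>
     \<comment> \<open>fibrations closed under composition and contain the isomorphisms\<close>
     (\<forall>f \<in> Fib. \<forall>g \<in> Fib. cd C f = dm C g \<longrightarrow> cmp C g f \<in> Fib) \<and>
     isos C \<subseteq> Fib \<and>
     \<comment> \<open>pullbacks of fibrations along arbitrary maps exist and are fibrations\<close>
     (\<forall>p \<in> Fib. \<forall>f \<in> arr C. cd C f = cd C p \<longrightarrow> (\<exists>P p1 p2. is_pullback C p f P p1 p2)) \<and>
     (\<forall>p \<in> Fib. \<forall>f P p1 p2. is_pullback C p f P p1 p2 \<longrightarrow> p2 \<in> Fib) \<and>
     \<comment> \<open>terminal object, every map to it is a fibration\<close>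
     (\<exists>T. is_terminal C T \<and> (\<forall>X \<in> obj C. \<forall>u \<in> hom C X T. u \<in> Fib)) \<and>
     \<comment> \<open>isomorphisms are weak equivalences; 2-out-of-6\<close>
     isos C \<subseteq> We \<and>
     two_out_of_six C We \<and>
     \<comment> \<open>path objects\<close>
     (\<forall>X \<in> obj C. \<exists>Q q1 q2 P w q.
        is_product C X X Q q1 q2 \<and> w \<in> hom C X P \<and> w \<in> We \<and>
        q \<in> hom C P Q \<and> q \<in> Fib \<and>
        cmp C q1 (cmp C q w) = idt C X \<and> cmp C q2 (cmp C q w) = idt C X) \<and>
     \<comment> \<open>pullbacks of trivial fibrations are trivial fibrations\<close>
     (\<forall>p \<in> Fib \<inter> We. \<forall>f P p1 p2. is_pullback C p f P p1 p2 \<longrightarrow> p2 \<in> We) \<and>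
     \<comment> \<open>every trivial fibration has a section\<close>
     (\<forall>p \<in> Fib \<inter> We. \<exists>s \<in> hom C (cd C p) (dm C p). cmp C p s = idt C (cd C p))"

text \<open>For a fibration p : Y \<rightarrow> A: a factorisation of the diagonal Y \<rightarrow> Y \<times>_A Y
  as a weak equivalence w : Y \<rightarrow> P followed by a fibration q : P \<rightarrow> Y \<times>_A Y = Q.\<close>
definition fw_path_obj ::
  "('o, 'm) cat \<Rightarrow> 'm set \<Rightarrow> 'm set \<Rightarrow> 'm \<Rightarrow> 'o \<Rightarrow> 'm \<Rightarrow> 'm \<Rightarrow> 'o \<Rightarrow> 'm \<Rightarrow> 'm \<Rightarrow> bool" where
  "fw_path_obj C Fib We p Q r1 r2 P w q \<longleftrightarrow>
     is_pullback C p p Q r1 r2 \<and>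
     w \<in> hom C (dm C p) P \<and> w \<in> We \<and> q \<in> hom C P Q \<and> q \<in> Fib \<and>
     cmp C r1 (cmp C q w) = idt C (dm C p) \<and> cmp C r2 (cmp C q w) = idt C (dm C p)"

definition fw_htpy :: "('o, 'm) cat \<Rightarrow> 'm set \<Rightarrow> 'm set \<Rightarrow> 'm \<Rightarrow> 'm \<Rightarrow> 'm \<Rightarrow> bool" where
  "fw_htpy C Fib We p m m' \<longleftrightarrow>
     p \<in> Fib \<and> m \<in> arr C \<and> m' \<in> arr C \<and> dm C m = dm C m' \<and>
     cd C m = dm C p \<and> cd C m' = dm C p \<and> cmp C p m = cmp C p m' \<and>
     (\<exists>Q r1 r2 P w q H. fw_path_obj C Fib We p Q r1 r2 P w q \<and>
        H \<in> hom C (dm C m) P \<and>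
        cmp C r1 (cmp C q H) = m \<and> cmp C r2 (cmp C q H) = m')"

text \<open>Data for \<Pi>_f(g), f : B \<rightarrow> A, g : C \<rightarrow> B: pi : Pi \<rightarrow> A, a pullback
  (PB, e1 : PB \<rightarrow> Pi, e2 : PB \<rightarrow> B) = Pi \<times>_A B, and eps : PB \<rightarrow> C.\<close>
definition weak_pi_type ::
  "('o, 'm) cat \<Rightarrow> 'm set \<Rightarrow> 'm set \<Rightarrow> 'm \<Rightarrow> 'm \<Rightarrow> 'o \<Rightarrow> 'm \<Rightarrow> 'o \<Rightarrow> 'm \<Rightarrow> 'm \<Rightarrow> 'm \<Rightarrow> bool" where
  "weak_pi_type C Fib We f g Pi pi PB e1 e2 eps \<longleftrightarrow>
     f \<in> Fib \<and> g \<in> Fib \<and> cd C g = dm C f \<and>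
     pi \<in> hom C Pi (cd C f) \<and> pi \<in> Fib \<and>
     is_pullback C pi f PB e1 e2 \<and>
     eps \<in> hom C PB (dm C g) \<and> cmp C g eps = e2 \<and>
     (\<forall>D h DB q1 q2 m. h \<in> hom C D (cd C f) \<longrightarrow> is_pullback C h f DB q1 q2 \<longrightarrow>
        m \<in> hom C DB (dm C g) \<longrightarrow> cmp C g m = q2 \<longrightarrow>
        (\<exists>k \<in> hom C D Pi. cmp C pi k = h \<and>
           (\<exists>u \<in> hom C DB PB. cmp C e1 u = cmp C k q1 \<and> cmp C e2 u = q2 \<and>
              fw_htpy C Fib We g (cmp C eps u) m)))"

definition strong_pi_type ::
  "('o, 'm) cat \<Rightarrow> 'm set \<Rightarrow> 'm set \<Rightarrow> 'm \<Rightarrow> 'm \<Rightarrow> 'o \<Rightarrow> 'm \<Rightarrow> 'o \<Rightarrow> 'm \<Rightarrow> 'm \<Rightarrow> 'm \<Rightarrow> bool" where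
  "strong_pi_type C Fib We f g Pi pi PB e1 e2 eps \<longleftrightarrow>
     weak_pi_type C Fib We f g Pi pi PB e1 e2 eps \<and>
     (\<forall>D k k' DB q1 q2 u u'. k \<in> hom C D Pi \<longrightarrow> k' \<in> hom C D Pi \<longrightarrow>
        cmp C pi k = cmp C pi k' \<longrightarrow> is_pullback C (cmp C pi k) f DB q1 q2 \<longrightarrow>
        u \<in> hom C DB PB \<longrightarrow> cmp C e1 u = cmp C k q1 \<longrightarrow> cmp C e2 u = q2 \<longrightarrow>
        u' \<in> hom C DB PB \<longrightarrow> cmp C e1 u' = cmp C k' q1 \<longrightarrow> cmp C e2 u' = q2 \<longrightarrow>
        fw_htpy C Fib We g (cmp C eps u) (cmp C eps u') \<longrightarrow>
        fw_htpy C Fib We pi k k')"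

definition pi_type ::
  "bool \<Rightarrow> ('o, 'm) cat \<Rightarrow> 'm set \<Rightarrow> 'm set \<Rightarrow> 'm \<Rightarrow> 'm \<Rightarrow> 'o \<Rightarrow> 'm \<Rightarrow> 'o \<Rightarrow> 'm \<Rightarrow> 'm \<Rightarrow> 'm \<Rightarrow> bool" where
  "pi_type strong C Fib We f g Pi pi PB e1 e2 eps \<longleftrightarrow>
     (if strong then strong_pi_type C Fib We f g Pi pi PB e1 e2 eps
      else weak_pi_type C Fib We f g Pi pi PB e1 e2 eps)"

definition display_class :: "bool \<Rightarrow> ('o, 'm) cat \<Rightarrow> 'm set \<Rightarrow> 'm set \<Rightarrow> 'm set \<Rightarrow> bool" where
  "display_class strong C Fib We Dm \<longleftrightarrow>
     Dm \<subseteq> Fib \<and>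
     (\<forall>X \<in> obj C. idt C X \<in> Dm) \<and>
     (\<forall>d \<in> Dm. \<forall>h \<in> arr C. cd C h = cd C d \<longrightarrow>
        (\<exists>P p1 p2. is_pullback C d h P p1 p2 \<and> p2 \<in> Dm)) \<and>
     (\<forall>d \<in> Dm. \<forall>e \<in> Dm. cd C d = dm C e \<longrightarrow>
        (\<exists>Pi pi PB e1 e2 eps. pi_type strong C Fib We e d Pi pi PB e1 e2 eps \<and> pi \<in> Dm))"

end

theory Submission
  imports Defs
begin

definition invp :: "('o, 'm) cat \<Rightarrow> 'm \<Rightarrow> 'm \<Rightarrow> bool" where
  "invp C f g \<longleftrightarrow> f \<in> arr C \<and> g \<in> arr C \<and> dm C g = cd C f \<and> cd C g = dm C f \<and>
     cmp C g f = idt C (dm C f) \<and> cmp C f g = idt C (cd C f)"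

locale pcat =
  fixes C :: "('o, 'm) cat" and Fib We :: "'m set"
  assumes PC: "path_category C Fib We"
begin

lemma cat: "is_category C" using PC unfolding path_category_def by blast

lemma dm_obj[simp]: "f \<in> arr C \<Longrightarrow> dm C f \<in> obj C"
  using cat unfolding is_category_def by blast
lemma cd_obj[simp]: "f \<in> arr C \<Longrightarrow> cd C f \<in> obj C"
  using cat unfolding is_category_def by blast
lemma idt_arr[simp]: "X \<in> obj C \<Longrightarrow> idt C X \<in> arr C"
  using cat unfolding is_category_def hom_def by blast
lemma idt_dm[simp]: "X \<in> obj C \<Longrightarrow> dm C (idt C X) = X"
  using cat unfolding is_category_def hom_def by blast
lemma idt_cd[simp]: "X \<in> obj C \<Longrightarrow> cd C (idt C X) = X"
  using cat unfolding is_category_def hom_def by blast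
lemma cmp_arr[simp]: "f \<in> arr C \<Longrightarrow> g \<in> arr C \<Longrightarrow> cd C f = dm C g \<Longrightarrow> cmp C g f \<in> arr C"
  using cat unfolding is_category_def hom_def by blast
lemma cmp_dm[simp]: "f \<in> arr C \<Longrightarrow> g \<in> arr C \<Longrightarrow> cd C f = dm C g \<Longrightarrow> dm C (cmp C g f) = dm C f"
  using cat unfolding is_category_def hom_def by blast
lemma cmp_cd[simp]: "f \<in> arr C \<Longrightarrow> g \<in> arr C \<Longrightarrow> cd C f = dm C g \<Longrightarrow> cd C (cmp C g f) = cd C g"
  using cat unfolding is_category_def hom_def by blast
lemma id_l[simp]: "f \<in> arr C \<Longrightarrow> cd C f = X \<Longrightarrow> cmp C (idt C X) f = f"
  using cat unfolding is_category_def by blast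
lemma id_r[simp]: "f \<in> arr C \<Longrightarrow> dm C f = X \<Longrightarrow> cmp C f (idt C X) = f"
  using cat unfolding is_category_def by blast
lemma assoc[simp]: "f \<in> arr C \<Longrightarrow> g \<in> arr C \<Longrightarrow> h \<in> arr C \<Longrightarrow> cd C f = dm C g \<Longrightarrow> cd C g = dm C h \<Longrightarrow>
  cmp C (cmp C h g) f = cmp C h (cmp C g f)"
  using cat unfolding is_category_def by metis

lemma assoc_sub: "f \<in> arr C \<Longrightarrow> g \<in> arr C \<Longrightarrow> h \<in> arr C \<Longrightarrow> cd C f = dm C g \<Longrightarrow> cd C g = dm C h \<Longrightarrow>
  cmp C h g = k \<Longrightarrow> cmp C h (cmp C g f) = cmp C k f"
  by (metis assoc)

lemma invp_iso: "f \<in> isos C \<Longrightarrow> \<exists>g. invp C f g"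
  unfolding isos_def invp_def hom_def by blast
lemma invp_isos: "invp C f g \<Longrightarrow> f \<in> isos C"
  unfolding isos_def invp_def hom_def by blast
lemma invp_sym: "invp C f g \<Longrightarrow> invp C g f"
  unfolding invp_def by auto

lemma invp_simps:
  assumes "invp C f g"
  shows "f \<in> arr C" "g \<in> arr C" "dm C g = cd C f" "cd C g = dm C f"
    "cmp C g f = idt C (dm C f)" "cmp C f g = idt C (cd C f)"
    "x \<in> arr C \<Longrightarrow> cd C x = dm C f \<Longrightarrow> cmp C g (cmp C f x) = x"
    "y \<in> arr C \<Longrightarrow> cd C y = cd C f \<Longrightarrow> cmp C f (cmp C g y) = y"
proof -
  show a: "f \<in> arr C" "g \<in> arr C" "dm C g = cd C f" "cd C g = dm C f"
    "cmp C g f = idt C (dm C f)" "cmp C f g = idt C (cd C f)"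
    using assms unfolding invp_def by auto
  show "x \<in> arr C \<Longrightarrow> cd C x = dm C f \<Longrightarrow> cmp C g (cmp C f x) = x"
  proof -
    assume x: "x \<in> arr C" "cd C x = dm C f"
    have e: "cmp C (cmp C g f) x = cmp C g (cmp C f x)" using a x by (intro assoc) auto
    show ?thesis by (metis e a(5) id_l x)
  qed
  show "y \<in> arr C \<Longrightarrow> cd C y = cd C f \<Longrightarrow> cmp C f (cmp C g y) = y"
  proof -
    assume x: "y \<in> arr C" "cd C y = cd C f"
    have e: "cmp C (cmp C f g) y = cmp C f (cmp C g y)" using a x by (intro assoc) auto
    show ?thesis by (metis e a(6) id_l x)
  qed
qed

lemma id_invp: "X \<in> obj C \<Longrightarrow> invp C (idt C X) (idt C X)"
  unfolding invp_def by simp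

lemma isos_Fib: "isos C \<subseteq> Fib" using PC unfolding path_category_def by blast
lemma isos_We: "isos C \<subseteq> We" using PC unfolding path_category_def by blast
lemma Fib_arr: "Fib \<subseteq> arr C" using PC by (simp add: path_category_def)

lemma We_iso_comp:
  assumes w: "w \<in> We" "w \<in> arr C" and i: "invp C a a'" and c: "cd C a = dm C w"
  shows "cmp C w a \<in> We"
proof -
  note I = invp_simps[OF i]
  have t: "two_out_of_six C We" using PC unfolding path_category_def by blast
  have 1: "cmp C a' a \<in> We" using I isos_We id_invp invp_isos
    by (metis dm_obj subsetD)
  have "cmp C (cmp C w a) a' = w" using I w c by simp
  then have 2: "cmp C (cmp C w a) a' \<in> We" using w by simp
  show ?thesis using t 1 2 I w c unfolding two_out_of_six_def
    by (metis cmp_arr cmp_dm)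
qed

lemma pb_sym:
  assumes "is_pullback C f g P p1 p2"
  shows "is_pullback C g f P p2 p1"
proof -
  have U: "\<forall>W a b. a \<in> hom C W (dm C f) \<longrightarrow> b \<in> hom C W (dm C g) \<longrightarrow> cmp C f a = cmp C g b \<longrightarrow>
        (\<exists>!u. u \<in> hom C W P \<and> cmp C p1 u = a \<and> cmp C p2 u = b)"
    using assms unfolding is_pullback_def by blast
  have "\<exists>!u. u \<in> hom C W P \<and> cmp C p2 u = a \<and> cmp C p1 u = b"
    if "a \<in> hom C W (dm C g)" "b \<in> hom C W (dm C f)" "cmp C g a = cmp C f b" for W a b
  proof -
    have e: "(\<lambda>u. u \<in> hom C W P \<and> cmp C p2 u = a \<and> cmp C p1 u = b) =
             (\<lambda>u. u \<in> hom C W P \<and> cmp C p1 u = b \<and> cmp C p2 u = a)" by auto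
    show ?thesis unfolding e using U that by simp
  qed
  then show ?thesis using assms unfolding is_pullback_def by auto
qed

lemma pb_iso_A:
  assumes i: "invp C f f'" and p: "p \<in> arr C" "cd C p = cd C f"
  shows "is_pullback C f p (dm C p) (cmp C f' p) (idt C (dm C p))"
proof -
  note I = invp_simps[OF i]
  have U: "\<exists>!u. u \<in> hom C W (dm C p) \<and> cmp C (cmp C f' p) u = a \<and> cmp C (idt C (dm C p)) u = b"
    if a: "a \<in> hom C W (dm C f)" "b \<in> hom C W (dm C p)" "cmp C f a = cmp C p b" for W a b
  proof (rule ex1I[of _ b])
    have "cmp C (cmp C f' p) b = cmp C f' (cmp C p b)" using a I p by (simp add: hom_def)
    also have "\<dots> = cmp C f' (cmp C f a)" using a by simp
    also have "\<dots> = a" using a(1,2) I p by (simp add: hom_def)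
    finally show "b \<in> hom C W (dm C p) \<and> cmp C (cmp C f' p) b = a \<and> cmp C (idt C (dm C p)) b = b"
      using a by (simp add: hom_def)
  next
    fix u assume "u \<in> hom C W (dm C p) \<and> cmp C (cmp C f' p) u = a \<and> cmp C (idt C (dm C p)) u = b"
    then show "u = b" using p by (auto simp: hom_def)
  qed
  show ?thesis unfolding is_pullback_def using U I p by (simp add: hom_def)
qed

lemma pb_iso_B:
  assumes i: "invp C f f'" and p: "p \<in> arr C" "cd C p = cd C f"
  shows "is_pullback C p f (dm C p) (idt C (dm C p)) (cmp C f' p)"
  using pb_sym[OF pb_iso_A[OF assms]] .

lemma pb_id:
  assumes "e \<in> arr C"
  shows "is_pullback C (idt C (cd C e)) e (dm C e) e (idt C (dm C e))"
  using pb_iso_A[OF id_invp[of "cd C e"]] assms by simp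

lemma pb_id2:
  assumes "e \<in> arr C"
  shows "is_pullback C e (idt C (cd C e)) (dm C e) (idt C (dm C e)) e"
  using pb_iso_B[OF id_invp[of "cd C e"]] assms by simp

lemma pb_iso_leg:
  assumes pb: "is_pullback C d g P p1 p2" and i: "invp C g g'"
  shows "\<exists>k. invp C p1 k"
proof -
  note I = invp_simps[OF i]
  have d: "d \<in> arr C" "cd C d = cd C g" "p1 \<in> hom C P (dm C d)" "p2 \<in> hom C P (dm C g)"
    "cmp C d p1 = cmp C g p2"
    using pb unfolding is_pullback_def by auto
  have U: "\<forall>W a b. a \<in> hom C W (dm C d) \<longrightarrow> b \<in> hom C W (dm C g) \<longrightarrow> cmp C d a = cmp C g b \<longrightarrow>
        (\<exists>!u. u \<in> hom C W P \<and> cmp C p1 u = a \<and> cmp C p2 u = b)"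
    using pb unfolding is_pullback_def by blast
  have "cmp C d (idt C (dm C d)) = cmp C g (cmp C g' d)" using d I by simp
  moreover have "idt C (dm C d) \<in> hom C (dm C d) (dm C d)" "cmp C g' d \<in> hom C (dm C d) (dm C g)"
    using d I by (auto simp: hom_def)
  ultimately obtain u where u: "u \<in> hom C (dm C d) P" "cmp C p1 u = idt C (dm C d)" "cmp C p2 u = cmp C g' d"
    using U by blast
  have P: "P \<in> obj C" using d by (auto simp: hom_def)
  have U2: "\<exists>!v. v \<in> hom C P P \<and> cmp C p1 v = p1 \<and> cmp C p2 v = p2"
    using U d by blast
  have A: "cmp C u p1 \<in> hom C P P \<and> cmp C p1 (cmp C u p1) = p1 \<and> cmp C p2 (cmp C u p1) = p2"
  proof -
    have "cmp C p1 (cmp C u p1) = cmp C (idt C (dm C d)) p1"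
      by (rule assoc_sub) (use u d in \<open>auto simp: hom_def\<close>)
    then have 1: "cmp C p1 (cmp C u p1) = p1" using u d by (simp add: hom_def)
    have "cmp C p2 (cmp C u p1) = cmp C (cmp C g' d) p1"
      by (rule assoc_sub) (use u d in \<open>auto simp: hom_def\<close>)
    also have "\<dots> = cmp C g' (cmp C d p1)" using u d I by (simp add: hom_def)
    also have "\<dots> = p2" using d I by (simp add: hom_def)
    finally show ?thesis using 1 u d by (simp add: hom_def)
  qed
  have B: "idt C P \<in> hom C P P \<and> cmp C p1 (idt C P) = p1 \<and> cmp C p2 (idt C P) = p2"
    using P d by (simp add: hom_def)
  have "cmp C u p1 = idt C P" using U2 A B by blast
  then have "invp C p1 u" using u d unfolding invp_def by (simp add: hom_def)
  then show ?thesis by blast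
qed

lemma pb_post_iso:
  assumes pb: "is_pullback C f g P p1 p2" and i: "invp C e e'" and c: "cd C f = dm C e"
  shows "is_pullback C (cmp C e f) (cmp C e g) P p1 p2"
proof -
  note I = invp_simps[OF i]
  have d: "f \<in> arr C" "g \<in> arr C" "cd C f = cd C g" "p1 \<in> hom C P (dm C f)" "p2 \<in> hom C P (dm C g)"
    "cmp C f p1 = cmp C g p2"
    using pb unfolding is_pullback_def by auto
  have U: "\<forall>W a b. a \<in> hom C W (dm C f) \<longrightarrow> b \<in> hom C W (dm C g) \<longrightarrow> cmp C f a = cmp C g b \<longrightarrow>
        (\<exists>!u. u \<in> hom C W P \<and> cmp C p1 u = a \<and> cmp C p2 u = b)"
    using pb unfolding is_pullback_def by blast
  have "\<exists>!u. u \<in> hom C W P \<and> cmp C p1 u = a \<and> cmp C p2 u = b"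
    if a: "a \<in> hom C W (dm C (cmp C e f))" "b \<in> hom C W (dm C (cmp C e g))"
      "cmp C (cmp C e f) a = cmp C (cmp C e g) b" for W a b
  proof -
    have a': "a \<in> hom C W (dm C f)" "b \<in> hom C W (dm C g)" using a d c I by auto
    have "cmp C e (cmp C f a) = cmp C e (cmp C g b)" using a a' d c I by (simp add: hom_def)
    then have "cmp C e' (cmp C e (cmp C f a)) = cmp C e' (cmp C e (cmp C g b))" by simp
    then have "cmp C f a = cmp C g b" using a' d c I by (simp add: hom_def)
    then show ?thesis using U a' by blast
  qed
  moreover have "cmp C (cmp C e f) p1 = cmp C (cmp C e g) p2" using d c I by (simp add: hom_def)
  ultimately show ?thesis unfolding is_pullback_def using d c I by (simp add: hom_def)
qed

lemma pb_pre_iso_both: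
  assumes pb: "is_pullback C f f Q r1 r2" and i: "invp C a a'" and c: "cd C a = dm C f"
  shows "is_pullback C (cmp C f a) (cmp C f a) Q (cmp C a' r1) (cmp C a' r2)"
proof -
  note I = invp_simps[OF i]
  have d: "f \<in> arr C" "r1 \<in> hom C Q (dm C f)" "r2 \<in> hom C Q (dm C f)"
    "cmp C f r1 = cmp C f r2"
    using pb unfolding is_pullback_def by auto
  have U: "\<forall>W x y. x \<in> hom C W (dm C f) \<longrightarrow> y \<in> hom C W (dm C f) \<longrightarrow> cmp C f x = cmp C f y \<longrightarrow>
        (\<exists>!u. u \<in> hom C W Q \<and> cmp C r1 u = x \<and> cmp C r2 u = y)"
    using pb unfolding is_pullback_def by blast
  have "\<exists>!u. u \<in> hom C W Q \<and> cmp C (cmp C a' r1) u = x \<and> cmp C (cmp C a' r2) u = y"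
    if a: "x \<in> hom C W (dm C (cmp C f a))" "y \<in> hom C W (dm C (cmp C f a))"
      "cmp C (cmp C f a) x = cmp C (cmp C f a) y" for W x y
  proof -
    have a': "x \<in> hom C W (dm C a)" "y \<in> hom C W (dm C a)" using a d c I by auto
    have x': "cmp C a x \<in> hom C W (dm C f)" "cmp C a y \<in> hom C W (dm C f)" using a' c I d
      by (auto simp: hom_def)
    have "cmp C f (cmp C a x) = cmp C f (cmp C a y)" using a a' d c I by (simp add: hom_def)
    then have ex: "\<exists>!u. u \<in> hom C W Q \<and> cmp C r1 u = cmp C a x \<and> cmp C r2 u = cmp C a y"
      using U x' by blast
    then obtain u where u: "u \<in> hom C W Q" "cmp C r1 u = cmp C a x" "cmp C r2 u = cmp C a y"
      by blast
    have un: "\<And>v. v \<in> hom C W Q \<Longrightarrow> cmp C r1 v = cmp C a x \<Longrightarrow> cmp C r2 v = cmp C a y \<Longrightarrow> v = u"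
      using ex u by blast
    show ?thesis
    proof (rule ex1I[of _ u])
      have "cmp C (cmp C a' r1) u = cmp C a' (cmp C r1 u)" using u d c I by (simp add: hom_def)
      moreover have "cmp C (cmp C a' r2) u = cmp C a' (cmp C r2 u)" using u d c I by (simp add: hom_def)
      ultimately show "u \<in> hom C W Q \<and> cmp C (cmp C a' r1) u = x \<and> cmp C (cmp C a' r2) u = y"
        using u a' I by (simp add: hom_def)
    next
      fix v assume v: "v \<in> hom C W Q \<and> cmp C (cmp C a' r1) v = x \<and> cmp C (cmp C a' r2) v = y"
      have v1: "cmp C a' (cmp C r1 v) = x" "cmp C a' (cmp C r2 v) = y" using v d c I by (auto simp: hom_def)
      have "cmp C a (cmp C a' (cmp C r1 v)) = cmp C r1 v" "cmp C a (cmp C a' (cmp C r2 v)) = cmp C r2 v"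
        using v d c I by (auto simp: hom_def)
      then have "cmp C r1 v = cmp C a x" "cmp C r2 v = cmp C a y" using v1 by auto
      then show "v = u" using un v by blast
    qed
  qed
  moreover have "cmp C (cmp C f a) (cmp C a' r1) = cmp C (cmp C f a) (cmp C a' r2)"
  proof -
    have "cmp C (cmp C f a) (cmp C a' r1) = cmp C f r1" using d c I by (simp add: hom_def)
    moreover have "cmp C (cmp C f a) (cmp C a' r2) = cmp C f r2" using d c I by (simp add: hom_def)
    ultimately show ?thesis using d by simp
  qed
  ultimately show ?thesis unfolding is_pullback_def using d c I by (simp add: hom_def)
qed

lemma fw_refl:
  assumes p: "p \<in> Fib" and fp: "fw_path_obj C Fib We p Q r1 r2 P w q"
    and m: "m \<in> arr C" "cd C m = dm C p"
  shows "fw_htpy C Fib We p m m"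
proof -
  have d: "is_pullback C p p Q r1 r2" "w \<in> hom C (dm C p) P" "q \<in> hom C P Q"
    "cmp C r1 (cmp C q w) = idt C (dm C p)" "cmp C r2 (cmp C q w) = idt C (dm C p)"
    using fp unfolding fw_path_obj_def by auto
  have r: "r1 \<in> hom C Q (dm C p)" "r2 \<in> hom C Q (dm C p)" using d(1) unfolding is_pullback_def by auto
  have e1: "cmp C r1 (cmp C q (cmp C w m)) = cmp C (cmp C r1 (cmp C q w)) m"
    using d(1-3) r m by (simp add: hom_def)
  have e2: "cmp C r2 (cmp C q (cmp C w m)) = cmp C (cmp C r2 (cmp C q w)) m"
    using d(1-3) r m by (simp add: hom_def)
  have e3: "cmp C (cmp C r1 (cmp C q w)) m = m" "cmp C (cmp C r2 (cmp C q w)) m = m"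
    using d m by simp_all
  have "cmp C r1 (cmp C q (cmp C w m)) = m" "cmp C r2 (cmp C q (cmp C w m)) = m"
    using e1 e2 e3 by simp_all
  moreover have "cmp C w m \<in> hom C (dm C m) P" using d m by (simp add: hom_def)
  ultimately show ?thesis unfolding fw_htpy_def using p m fp by blast
qed

lemma fw_path_iso:
  assumes i: "invp C p p'"
  shows "fw_path_obj C Fib We p (dm C p) (idt C (dm C p)) (idt C (dm C p)) (dm C p) (idt C (dm C p)) (idt C (dm C p))"
proof -
  note I = invp_simps[OF i]
  have "is_pullback C p p (dm C p) (cmp C p' p) (idt C (dm C p))" using pb_iso_A[OF i I(1) refl] I by simp
  then have pb: "is_pullback C p p (dm C p) (idt C (dm C p)) (idt C (dm C p))" using I by simp
  have ii: "idt C (dm C p) \<in> isos C" using id_invp invp_isos I by (meson dm_obj)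
  then show ?thesis unfolding fw_path_obj_def using pb I isos_Fib isos_We by (auto simp: hom_def)
qed

lemma fw_refl_iso:
  assumes i: "invp C p p'" and m: "m \<in> arr C" "cd C m = dm C p"
  shows "fw_htpy C Fib We p m m"
  using fw_refl[OF _ fw_path_iso[OF i] m] isos_Fib invp_isos[OF i] by blast

end

theorem lemma6p3:
  fixes C :: "('o, 'm) cat" and Fib We Dm :: "'m set" and strong :: bool
  assumes "path_category C Fib We"
    and "display_class strong C Fib We Dm"
  shows "display_class strong C Fib We (Dm \<union> isos C)"
proof -
  interpret pcat C Fib We by unfold_locales (rule assms(1))
  have DF: "Dm \<subseteq> Fib" and idD: "\<And>X. X \<in> obj C \<Longrightarrow> idt C X \<in> Dm"
    and pbD: "\<And>d h. d \<in> Dm \<Longrightarrow> h \<in> arr C \<Longrightarrow> cd C h = cd C d \<Longrightarrow>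
        (\<exists>P p1 p2. is_pullback C d h P p1 p2 \<and> p2 \<in> Dm)"
    and piD: "\<And>d e. d \<in> Dm \<Longrightarrow> e \<in> Dm \<Longrightarrow> cd C d = dm C e \<Longrightarrow>
        (\<exists>Pi pi PB e1 e2 eps. pi_type strong C Fib We e d Pi pi PB e1 e2 eps \<and> pi \<in> Dm)"
    using assms(2) unfolding display_class_def by blast+
  have pi_weak: "weak_pi_type C Fib We f g Pi pi PB e1 e2 eps"
    if "pi_type strong C Fib We f g Pi pi PB e1 e2 eps" for f g Pi pi PB e1 e2 eps
    using that unfolding pi_type_def strong_pi_type_def by (cases strong) auto
  have fpD: "\<exists>Q r1 r2 P w q. fw_path_obj C Fib We d Q r1 r2 P w q" if d: "d \<in> Dm" for d
  proof -
    have da: "d \<in> arr C" using d DF Fib_arr by blast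
    have "idt C (cd C d) \<in> Dm" using idD da by simp
    then obtain Pi pi PB e1 e2 eps where
      "pi_type strong C Fib We (idt C (cd C d)) d Pi pi PB e1 e2 eps"
      using piD[OF d] da by fastforce
    then have W: "weak_pi_type C Fib We (idt C (cd C d)) d Pi pi PB e1 e2 eps" by (rule pi_weak)
    have "d \<in> hom C (dm C d) (cd C (idt C (cd C d)))" using da by (simp add: hom_def)
    moreover note pb_id2[OF da]
    moreover have "idt C (dm C d) \<in> hom C (dm C d) (dm C d)" "cmp C d (idt C (dm C d)) = d"
      using da by (simp_all add: hom_def)
    ultimately obtain u where "fw_htpy C Fib We d (cmp C eps u) (idt C (dm C d))"
      using W unfolding weak_pi_type_def by fastforce
    then show ?thesis unfolding fw_htpy_def by blast
  qed
  have S1: "Dm \<union> isos C \<subseteq> Fib" using DF isos_Fib by blast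
  have refl: "fw_htpy C Fib We d m m" if d: "d \<in> Dm \<union> isos C" and m: "m \<in> arr C" "cd C m = dm C d" for d m
  proof (cases "d \<in> Dm")
    case True
    then obtain Q r1 r2 P w q where "fw_path_obj C Fib We d Q r1 r2 P w q" using fpD by blast
    then show ?thesis using fw_refl[OF _ _ m] True DF by blast
  next
    case False
    then obtain d' where "invp C d d'" using d invp_iso by blast
    then show ?thesis using fw_refl_iso m by blast
  qed
  have S2: "\<forall>X \<in> obj C. idt C X \<in> Dm \<union> isos C" using idD by blast
  have S3: "\<exists>P p1 p2. is_pullback C d h P p1 p2 \<and> p2 \<in> Dm \<union> isos C"
    if d: "d \<in> Dm \<union> isos C" and h: "h \<in> arr C" "cd C h = cd C d" for d h
  proof (cases "d \<in> Dm")
    case True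
    then show ?thesis using pbD h by blast
  next
    case False
    then obtain d' where i: "invp C d d'" using d invp_iso by blast
    have "idt C (dm C h) \<in> Dm" using idD h by simp
    then show ?thesis using pb_iso_A[OF i h] by blast
  qed
  have S4: "\<exists>Pi pi PB e1 e2 eps. pi_type strong C Fib We e d Pi pi PB e1 e2 eps \<and> pi \<in> Dm \<union> isos C"
    if d: "d \<in> Dm \<union> isos C" and e: "e \<in> Dm \<union> isos C" and c: "cd C d = dm C e" for d e
  proof -
    have dF: "d \<in> Fib" "e \<in> Fib" using d e S1 by blast+
    have da: "d \<in> arr C" "e \<in> arr C" using dF Fib_arr by blast+
    consider "d \<in> Dm" "e \<in> Dm" | "e \<in> isos C" | "d \<in> isos C" "e \<in> Dm" using d e by blast
    then show ?thesis
    proof cases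
      case 1
      then show ?thesis using piD c by blast
    next
      case 2
      then obtain e' where ie: "invp C e e'" using invp_iso by blast
      note IE = invp_simps[OF ie]
      have ie': "invp C e' e" using invp_sym[OF ie] .
      have e'a: "e' \<in> arr C" "cd C e' = cd C d" using IE c by auto
      obtain P p1 p2 where pb: "is_pullback C d e' P p1 p2" and p2D: "p2 \<in> Dm \<union> isos C"
        using S3[OF d e'a] by blast
      have pp: "p1 \<in> arr C" "dm C p1 = P" "cd C p1 = dm C d" "p2 \<in> arr C" "dm C p2 = P" "cd C p2 = cd C e"
        "cmp C d p1 = cmp C e' p2"
        using pb IE unfolding is_pullback_def hom_def by auto
      obtain f' where iphi: "invp C p1 f'" using pb_iso_leg[OF pb ie'] by blast
      note IP = invp_simps[OF iphi]
      have T: "d \<in> arr C" "e \<in> arr C" "cd C d = dm C e" using da c by auto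
      have p2eq: "cmp C e (cmp C d p1) = p2"
      proof -
        have "cmp C e (cmp C d p1) = cmp C e (cmp C e' p2)" using pp by simp
        also have "\<dots> = p2" using IE pp by simp
        finally show ?thesis .
      qed
      have p2F: "p2 \<in> Fib" using p2D S1 by blast
      have Po: "P \<in> obj C" using pp by (metis dm_obj)
      have W: "weak_pi_type C Fib We e d P p2 P (idt C P) (cmp C e' p2) p1"
        unfolding weak_pi_type_def
      proof (intro conjI allI impI)
        show "is_pullback C p2 e P (idt C P) (cmp C e' p2)"
          using pb_iso_B[OF ie pp(4) pp(6)] pp by simp
        show "cmp C d p1 = cmp C e' p2" by (rule pp(7))
      next
        fix D h DB q1 q2 m
        assume h: "h \<in> hom C D (cd C e)" and pbq: "is_pullback C h e DB q1 q2"
          and m: "m \<in> hom C DB (dm C d)" and dm: "cmp C d m = q2"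
        have q: "q1 \<in> arr C" "dm C q1 = DB" "cd C q1 = D" "q2 \<in> arr C" "dm C q2 = DB" "cd C q2 = dm C e"
          "cmp C h q1 = cmp C e q2"
          using pbq h unfolding is_pullback_def hom_def by auto
        have hh: "h \<in> arr C" "dm C h = D" "cd C h = cd C e" using h by (auto simp: hom_def)
        have mm: "m \<in> arr C" "dm C m = DB" "cd C m = dm C d" using m by (auto simp: hom_def)
        obtain psi where ipsi: "invp C q1 psi" using pb_iso_leg[OF pbq ie] by blast
        note IS = invp_simps[OF ipsi]
        define k where "k = cmp C f' (cmp C m psi)"
        have kh: "k \<in> hom C D P" unfolding k_def using IS IP mm q pp by (simp add: hom_def)
        have ka: "k \<in> arr C" "dm C k = D" "cd C k = P" using kh by (auto simp: hom_def)
        have "cmp C p2 k = cmp C (cmp C e (cmp C d p1)) k" using p2eq by simp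
        also have "\<dots> = cmp C e (cmp C d (cmp C p1 k))" using T pp(1-6) ka by simp
        also have "\<dots> = cmp C e (cmp C d (cmp C m psi))" unfolding k_def using IP IS mm q pp by simp
        also have "\<dots> = cmp C e (cmp C (cmp C d m) psi)" using T mm IS q by simp
        also have "\<dots> = cmp C e (cmp C q2 psi)" using dm by simp
        also have "\<dots> = cmp C (cmp C e q2) psi" using T q IS by simp
        also have "\<dots> = cmp C (cmp C h q1) psi" using q by simp
        also have "\<dots> = h" using hh q(1-6) IS by simp
        finally have k1: "cmp C p2 k = h" .
        define u where "u = cmp C k q1"
        have uh: "u \<in> hom C DB P" unfolding u_def using ka q by (simp add: hom_def)
        have u1: "cmp C (idt C P) u = cmp C k q1" unfolding u_def using ka q by simp
        have pu: "cmp C p1 u = m"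
        proof -
          have "cmp C p1 u = cmp C p1 (cmp C f' (cmp C m (cmp C psi q1)))"
            unfolding u_def k_def using IP IS mm q pp by simp
          also have "\<dots> = m" using IP IS mm q pp by simp
          finally show ?thesis .
        qed
        have u2: "cmp C (cmp C e' p2) u = q2"
        proof -
          have "cmp C (cmp C e' p2) u = cmp C (cmp C d p1) u" using pp by simp
          also have "\<dots> = cmp C d (cmp C p1 u)" using T pp(1-6) uh by (simp add: hom_def)
          also have "\<dots> = q2" using pu dm by simp
          finally show ?thesis .
        qed
        have "fw_htpy C Fib We d (cmp C p1 u) m" using pu refl d mm by simp
        then show "\<exists>k \<in> hom C D P. cmp C p2 k = h \<and>
           (\<exists>u \<in> hom C DB P. cmp C (idt C P) u = cmp C k q1 \<and> cmp C (cmp C e' p2) u = q2 \<and>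
              fw_htpy C Fib We d (cmp C p1 u) m)"
          using kh k1 uh u1 u2 by blast
      qed (use dF c pp p2F Po IE in \<open>auto simp: hom_def\<close>)
      have St: "fw_htpy C Fib We p2 k k'"
        if k: "k \<in> hom C D P" "k' \<in> hom C D P" and kk: "cmp C p2 k = cmp C p2 k'"
          and pbq: "is_pullback C (cmp C p2 k) e DB q1 q2"
          and u: "u \<in> hom C DB P" "cmp C (idt C P) u = cmp C k q1" "cmp C (cmp C e' p2) u = q2"
          and u': "u' \<in> hom C DB P" "cmp C (idt C P) u' = cmp C k' q1" "cmp C (cmp C e' p2) u' = q2"
          and hp: "fw_htpy C Fib We d (cmp C p1 u) (cmp C p1 u')"
        for D k k' DB q1 q2 u u'
      proof -
        have ka: "k \<in> arr C" "dm C k = D" "cd C k = P" "k' \<in> arr C" "dm C k' = D" "cd C k' = P"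
          using k by (auto simp: hom_def)
        have q: "q1 \<in> arr C" "dm C q1 = DB" "cd C q1 = D" "q2 \<in> arr C" "dm C q2 = DB" "cd C q2 = dm C e"
          using pbq ka pp unfolding is_pullback_def hom_def by auto
        obtain psi where ipsi: "invp C q1 psi" using pb_iso_leg[OF pbq ie] by blast
        note IS = invp_simps[OF ipsi]
        have ue: "u = cmp C k q1" "u' = cmp C k' q1" using u u' by (auto simp: hom_def)
        obtain Q r1 r2 Pd w q H where fp: "fw_path_obj C Fib We d Q r1 r2 Pd w q"
          and H: "H \<in> hom C (dm C (cmp C p1 u)) Pd" "cmp C r1 (cmp C q H) = cmp C p1 u"
            "cmp C r2 (cmp C q H) = cmp C p1 u'"
          using hp unfolding fw_htpy_def by blast
        have fpd: "is_pullback C d d Q r1 r2" "w \<in> hom C (dm C d) Pd" "w \<in> We" "q \<in> hom C Pd Q" "q \<in> Fib"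
          "cmp C r1 (cmp C q w) = idt C (dm C d)" "cmp C r2 (cmp C q w) = idt C (dm C d)"
          using fp unfolding fw_path_obj_def by auto
        have r: "r1 \<in> arr C" "dm C r1 = Q" "cd C r1 = dm C d" "r2 \<in> arr C" "dm C r2 = Q" "cd C r2 = dm C d"
          using fpd(1) unfolding is_pullback_def hom_def by auto
        have wq: "w \<in> arr C" "dm C w = dm C d" "cd C w = Pd" "q \<in> arr C" "dm C q = Pd" "cd C q = Q"
          using fpd by (auto simp: hom_def)
        have ua: "cmp C p1 u \<in> arr C" "dm C (cmp C p1 u) = DB" unfolding ue using ka q pp by simp_all
        have Ha: "H \<in> arr C" "dm C H = DB" "cd C H = Pd" using H(1) ua by (auto simp: hom_def)
        have pbn0: "is_pullback C (cmp C (cmp C e d) p1) (cmp C (cmp C e d) p1) Q (cmp C f' r1) (cmp C f' r2)"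
          using pb_pre_iso_both[OF pb_post_iso[OF fpd(1) ie T(3)] iphi] T pp by simp
        have "cmp C (cmp C e d) p1 = p2" using p2eq T pp by simp
        then have pbn: "is_pullback C p2 p2 Q (cmp C f' r1) (cmp C f' r2)" using pbn0 by simp
        have wW: "cmp C w p1 \<in> We" using We_iso_comp[OF fpd(3) wq(1) iphi] pp wq by simp
        have c1: "cmp C (cmp C f' r1) (cmp C q (cmp C w p1)) = cmp C f' (cmp C (cmp C r1 (cmp C q w)) p1)"
          using IP r wq pp by simp
        have c2: "cmp C (cmp C f' r2) (cmp C q (cmp C w p1)) = cmp C f' (cmp C (cmp C r2 (cmp C q w)) p1)"
          using IP r wq pp by simp
        have c3: "cmp C f' (cmp C (cmp C r1 (cmp C q w)) p1) = idt C P"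
          "cmp C f' (cmp C (cmp C r2 (cmp C q w)) p1) = idt C P"
          using fpd(6,7) IP pp by simp_all
        have fpn: "fw_path_obj C Fib We p2 Q (cmp C f' r1) (cmp C f' r2) Pd (cmp C w p1) q"
          unfolding fw_path_obj_def using pbn wW fpd(4,5) c1 c2 c3 pp wq by (simp add: hom_def)
        have h1: "cmp C (cmp C f' r1) (cmp C q (cmp C H psi)) = cmp C f' (cmp C (cmp C r1 (cmp C q H)) psi)"
          using IP r wq Ha IS q pp(1-6) by simp
        have h2: "cmp C (cmp C f' r2) (cmp C q (cmp C H psi)) = cmp C f' (cmp C (cmp C r2 (cmp C q H)) psi)"
          using IP r wq Ha IS q pp(1-6) by simp
        have h3: "cmp C f' (cmp C (cmp C p1 u) psi) = k" "cmp C f' (cmp C (cmp C p1 u') psi) = k'"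
          unfolding ue using IP IS ka q pp by simp_all
        have Hn: "cmp C H psi \<in> hom C D Pd" using Ha IS q by (simp add: hom_def)
        have K1: "cmp C (cmp C f' r1) (cmp C q (cmp C H psi)) = k" by (metis h1 H(2) h3(1))
        have K2: "cmp C (cmp C f' r2) (cmp C q (cmp C H psi)) = k'" by (metis h2 H(3) h3(2))
        have Hn': "cmp C H psi \<in> hom C (dm C k) Pd" using Hn ka by simp
        have ex: "\<exists>Q r1 r2 P w q H. fw_path_obj C Fib We p2 Q r1 r2 P w q \<and>
          H \<in> hom C (dm C k) P \<and> cmp C r1 (cmp C q H) = k \<and> cmp C r2 (cmp C q H) = k'"
          using fpn Hn' K1 K2 by blast
        have o: "dm C k = dm C k'" "cd C k = dm C p2" "cd C k' = dm C p2" using ka pp by simp_all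
        show ?thesis unfolding fw_htpy_def using p2F ka(1,4) o kk ex by blast
      qed
      have "pi_type strong C Fib We e d P p2 P (idt C P) (cmp C e' p2) p1"
        unfolding pi_type_def strong_pi_type_def using W St by auto
      then show ?thesis using p2D by blast
    next
      case 3
      then obtain d' where i: "invp C d d'" using invp_iso by blast
      note I = invp_simps[OF i]
      have Jo: "cd C e \<in> obj C" "dm C e \<in> obj C" using da by auto
      have W: "weak_pi_type C Fib We e d (cd C e) (idt C (cd C e)) (dm C e) e (idt C (dm C e)) d'"
        unfolding weak_pi_type_def
      proof (intro conjI allI impI)
        show "idt C (cd C e) \<in> Fib" using id_invp invp_isos isos_Fib Jo by blast
        show "is_pullback C (idt C (cd C e)) e (dm C e) e (idt C (dm C e))" using pb_id da by blast
        show "d' \<in> hom C (dm C e) (dm C d)" using I c by (simp add: hom_def)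
        show "cmp C d d' = idt C (dm C e)" using I c by simp
      next
        fix D h DB q1 q2 m
        assume h: "h \<in> hom C D (cd C e)" and pb: "is_pullback C h e DB q1 q2"
          and m: "m \<in> hom C DB (dm C d)" and dm: "cmp C d m = q2"
        have q: "q1 \<in> hom C DB D" "q2 \<in> hom C DB (dm C e)" "cmp C h q1 = cmp C e q2"
          using pb h unfolding is_pullback_def hom_def by auto
        have "cmp C d' q2 = m" using dm m I by (auto simp: hom_def)
        moreover have "fw_htpy C Fib We d m m" using refl d m by (auto simp: hom_def)
        ultimately have "fw_htpy C Fib We d (cmp C d' q2) m" by simp
        moreover have "cmp C e q2 = cmp C h q1" "cmp C (idt C (dm C e)) q2 = q2"
          using q da by (auto simp: hom_def)
        moreover have "cmp C (idt C (cd C e)) h = h" using h by (simp add: hom_def)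
        ultimately show "\<exists>k \<in> hom C D (cd C e). cmp C (idt C (cd C e)) k = h \<and>
           (\<exists>u \<in> hom C DB (dm C e). cmp C e u = cmp C k q1 \<and> cmp C (idt C (dm C e)) u = q2 \<and>
              fw_htpy C Fib We d (cmp C d' u) m)"
          using h q by blast
      qed (use da dF c Jo in \<open>auto simp: hom_def\<close>)
      have St: "k \<in> hom C D (cd C e) \<Longrightarrow> k' \<in> hom C D (cd C e) \<Longrightarrow>
        cmp C (idt C (cd C e)) k = cmp C (idt C (cd C e)) k' \<Longrightarrow>
        fw_htpy C Fib We (idt C (cd C e)) k k'" for D k k'
        using fw_refl_iso[OF id_invp[OF Jo(1)]] Jo by (auto simp: hom_def)
      have "pi_type strong C Fib We e d (cd C e) (idt C (cd C e)) (dm C e) e (idt C (dm C e)) d'"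
        unfolding pi_type_def strong_pi_type_def using W St by auto
      moreover have "idt C (cd C e) \<in> Dm \<union> isos C" using idD Jo by blast
      ultimately show ?thesis by blast
    qed
  qed
  show ?thesis unfolding display_class_def using S1 S2 S3 S4 by blast
qed

end
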